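(* Let $G$ be a highly graceful graph. Then $G$ contains no subgraph isomorphic to any of the following graphs: (1) a cycle $C_n$ with $n \equiv 1$ or $2 \pmod 4$; (2) the union of two cycles $C_m$ and $C_n$ with $m, n \equiv 3 \pmod 4$ that have exactly one node in common; (3) the union of three cycles $C_l, C_m, C_n$ with $l \equiv 0 \pmod 4$ and $m, n \equiv 3 \pmod 4$, where $C_m$ and $C_n$ are node-disjoint and $C_l$ has exactly one node in common with each of $C_m$ and $C_n$.
   Context: Graphs are finite, undirected, without loops or multiple edges. A $(p,q)$-graph has $p$ nodes and $q$ edges. A graceful labeling of a $(p,q)$-graph $G$ is an injective map $\varphi: V(G) \to \{0,1,\dots,q\}$ such that the edge labels $|\varphi(u)-\varphi(v)|$, $uv \in E(G)$, are pairwise distinct (hence are exactly $1,\dots,q$); $G$ is graceful if it has a graceful labeling. A graph $G$ is highly graceful if every connected subgraph of $G$ (including $G$ itself) is graceful. *)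

theory Defs
  imports Main
begin

definition simple_graph :: "'a set \<Rightarrow> 'a set set \<Rightarrow> bool" where
  "simple_graph V E \<longleftrightarrow> finite V \<and>
     (\<forall>e\<in>E. \<exists>u v. e = {u, v} \<and> u \<noteq> v \<and> u \<in> V \<and> v \<in> V)"

definition subgraph :: "'a set \<Rightarrow> 'a set set \<Rightarrow> 'a set \<Rightarrow> 'a set set \<Rightarrow> bool" where
  "subgraph V' E' V E \<longleftrightarrow> V' \<subseteq> V \<and> E' \<subseteq> E \<and> (\<forall>e\<in>E'. e \<subseteq> V')"

definition connected_graph :: "'a set \<Rightarrow> 'a set set \<Rightarrow> bool" where
  "connected_graph V E \<longleftrightarrow> V \<noteq> {} \<and>
     (\<forall>u\<in>V. \<forall>v\<in>V. (u, v) \<in> {(x, y). {x, y} \<in> E}\<^sup>*)"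

definition graceful_labeling :: "'a set \<Rightarrow> 'a set set \<Rightarrow> ('a \<Rightarrow> nat) \<Rightarrow> bool" where
  "graceful_labeling V E \<phi> \<longleftrightarrow> inj_on \<phi> V \<and> (\<forall>v\<in>V. \<phi> v \<le> card E) \<and>
     (\<forall>u v x y. {u, v} \<in> E \<longrightarrow> {x, y} \<in> E \<longrightarrow>
        \<bar>int (\<phi> u) - int (\<phi> v)\<bar> = \<bar>int (\<phi> x) - int (\<phi> y)\<bar> \<longrightarrow> {u, v} = {x, y})"

definition graceful :: "'a set \<Rightarrow> 'a set set \<Rightarrow> bool" where
  "graceful V E \<longleftrightarrow> (\<exists>\<phi>. graceful_labeling V E \<phi>)"

definition highly_graceful :: "'a set \<Rightarrow> 'a set set \<Rightarrow> bool" where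
  "highly_graceful V E \<longleftrightarrow>
     (\<forall>V' E'. subgraph V' E' V E \<and> connected_graph V' E' \<longrightarrow> graceful V' E')"

text \<open>A cycle of length n = length xs in (V,E): distinct vertices x_0,...,x_{n-1}, n >= 3,
  with x_i x_{i+1 mod n} edges; i.e. a subgraph isomorphic to C_n.\<close>
definition is_cycle :: "'a set \<Rightarrow> 'a set set \<Rightarrow> 'a list \<Rightarrow> bool" where
  "is_cycle V E xs \<longleftrightarrow> length xs \<ge> 3 \<and> distinct xs \<and> set xs \<subseteq> V \<and>
     (\<forall>i < length xs. {xs ! i, xs ! ((i + 1) mod length xs)} \<in> E)"

end

theory Submission
  imports Defs
begin


lemma parity_q:
  fixes q :: nat
  assumes "even (\<Sum>{1..q})"
  shows "q mod 4 = 0 \<or> q mod 4 = 3"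
proof -
  have "\<Sum>{1..q} = \<Sum>{0..q}"
    by (cases q) (simp_all add: atLeast0_atMost_Suc_eq_insert_0 sum.atLeast_Suc_atMost)
  hence e: "even (q * Suc q div 2)" using assms gauss_sum_nat by simp
  define k where "k = q div 4"
  define r where "r = q mod 4"
  have qk: "q = 4*k + r" "r < 4" unfolding k_def r_def by auto
  have "r = 0 \<or> r = 1 \<or> r = 2 \<or> r = 3" using qk by auto
  moreover
  { assume "r = 1" hence "q * Suc q div 2 = (4*k+1)*(2*k+1)" using qk by (simp add: algebra_simps)
    hence False using e by simp }
  moreover
  { assume "r = 2" hence "q * Suc q div 2 = (2*k+1)*(4*k+3)" using qk by (simp add: algebra_simps)
    hence False using e by simp }
  ultimately show ?thesis using qk by auto
qed

lemma rosa:
  assumes fin: "finite V'"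
    and edg: "\<forall>e\<in>E'. \<exists>u v. e = {u, v} \<and> u \<noteq> v \<and> u \<in> V' \<and> v \<in> V'"
    and ev: "even (\<Sum>e\<in>E'. sum \<phi> e)"
    and gl: "graceful_labeling V' E' \<phi>"
  shows "card E' mod 4 = 0 \<or> card E' mod 4 = 3"
proof -
  let ?q = "card E'"
  define lab where "lab e = Max (\<phi> ` e) - Min (\<phi> ` e)" for e
  have finE: "finite E'"
  proof (rule finite_subset[of _ "Pow V'"])
    show "E' \<subseteq> Pow V'"
    proof
      fix e assume "e \<in> E'"
      then obtain u v where "e = {u,v}" "u \<in> V'" "v \<in> V'" using edg by blast
      thus "e \<in> Pow V'" by simp
    qed
  qed (use fin in simp)
  have labuv: "lab {u,v} = nat \<bar>int (\<phi> u) - int (\<phi> v)\<bar>" for u v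
    by (simp add: lab_def)
  have sumuv: "sum \<phi> e = lab e + 2 * Min (\<phi> ` e)" if "e \<in> E'" for e
  proof -
    from bspec[OF edg that] obtain u v where "e = {u,v}" "u \<noteq> v" by blast
    thus ?thesis by (simp add: lab_def max_def min_def)
  qed
  have inj: "inj_on lab E'"
  proof (rule inj_onI)
    fix e1 e2 assume "e1 \<in> E'" "e2 \<in> E'" "lab e1 = lab e2"
    from bspec[OF edg \<open>e1 \<in> E'\<close>] obtain u v where "e1 = {u,v}" by blast
    from bspec[OF edg \<open>e2 \<in> E'\<close>] obtain x y where "e2 = {x,y}" by blast
    have a: "\<bar>int (\<phi> u) - int (\<phi> v)\<bar> = \<bar>int (\<phi> x) - int (\<phi> y)\<bar>"
      using \<open>lab e1 = lab e2\<close> unfolding \<open>e1 = {u,v}\<close> \<open>e2 = {x,y}\<close> labuv by simp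
    have "{u,v} \<in> E'" "{x,y} \<in> E'" using \<open>e1 \<in> E'\<close> \<open>e2 \<in> E'\<close> \<open>e1 = {u,v}\<close> \<open>e2 = {x,y}\<close> by simp_all
    with a gl have "{u,v} = {x,y}" unfolding graceful_labeling_def by blast
    thus "e1 = e2" using \<open>e1 = {u,v}\<close> \<open>e2 = {x,y}\<close> by simp
  qed
  have sub: "lab ` E' \<subseteq> {1..?q}"
  proof
    fix l assume "l \<in> lab ` E'"
    then obtain e where "e \<in> E'" "l = lab e" by (rule imageE) simp
    from bspec[OF edg \<open>e \<in> E'\<close>] obtain u v where uv: "e = {u,v}" "u \<noteq> v" "u \<in> V'" "v \<in> V'" by blast
    have "\<phi> u \<noteq> \<phi> v" using gl uv unfolding graceful_labeling_def inj_on_def by blast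
    moreover have "\<phi> u \<le> ?q" "\<phi> v \<le> ?q" using gl uv unfolding graceful_labeling_def by auto
    ultimately show "l \<in> {1..?q}" using \<open>l = lab e\<close> uv labuv by auto
  qed
  have "card (lab ` E') = ?q" using inj card_image by blast
  hence img: "lab ` E' = {1..?q}" using sub by (intro card_subset_eq) auto
  have "sum lab E' = \<Sum>{1..?q}" using img inj by (metis sum.reindex_cong)
  moreover have "(\<Sum>e\<in>E'. sum \<phi> e) = sum lab E' + 2 * (\<Sum>e\<in>E'. Min (\<phi> ` e))"
    using sumuv by (simp add: sum.distrib sum_distrib_left)
  ultimately have "even (\<Sum>{1..?q})" using ev by simp
  thus ?thesis by (rule parity_q)
qed



definition ced :: "'a list \<Rightarrow> nat \<Rightarrow> 'a set" where
  "ced xs i = {xs ! i, xs ! ((i + 1) mod length xs)}"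

definition cyc :: "'a list \<Rightarrow> 'a set set" where
  "cyc xs = ced xs ` {..<length xs}"

lemma mod_arith1:
  fixes i j n :: nat
  assumes "i < n" "j < n" "3 \<le> n" "i = (j + 1) mod n" "j = (i + 1) mod n"
  shows False
proof (cases "j + 1 < n")
  case True
  hence i: "i = j + 1" using assms(4) by (metis mod_less)
  show False
  proof (cases "j + 2 < n")
    case True
    have "(i + 1) mod n = j + 2" using True i by (simp add: mod_less)
    thus False using assms(5) by linarith
  next
    case False
    hence jn: "j + 2 = n" using assms(1) i by linarith
    hence "(i + 1) mod n = 0" using i by (metis add_2_eq_Suc' add_Suc_right mod_self Suc_eq_plus1)
    thus False using assms(5) jn assms(3) by linarith
  qed
next
  case False
  hence jn: "j + 1 = n" using assms(2) by linarith
  hence "i = 0" using assms(4) by (metis mod_self)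
  hence "j = 1 mod n" using assms(5) by simp
  moreover have "1 mod n = 1" using assms(3) by (intro mod_less) linarith
  ultimately show False using assms(3) jn by linarith
qed

lemma ced_ne:
  assumes "is_cycle V E xs" "i < length xs"
  shows "xs ! i \<noteq> xs ! ((i + 1) mod length xs)"
proof
  assume h: "xs ! i = xs ! ((i + 1) mod length xs)"
  have d: "distinct xs" and n3: "3 \<le> length xs" using assms(1) unfolding is_cycle_def by auto
  have "(i + 1) mod length xs < length xs" using assms(2) by (intro mod_less_divisor) linarith
  hence "i = (i + 1) mod length xs" using nth_eq_iff_index_eq[OF d assms(2)] h by blast
  show False
  proof (cases "i + 1 < length xs")
    case True
    hence "(i + 1) mod length xs = i + 1" by (intro mod_less)
    thus False using \<open>i = (i + 1) mod length xs\<close> by linarith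
  next
    case False
    hence "i + 1 = length xs" using assms(2) by linarith
    hence "(i + 1) mod length xs = 0" by (metis mod_self)
    thus False using \<open>i = (i + 1) mod length xs\<close> n3 \<open>i + 1 = length xs\<close> by linarith
  qed
qed

lemma ced_inj:
  assumes "is_cycle V E xs"
  shows "inj_on (ced xs) {..<length xs}"
proof (rule inj_onI)
  fix i j assume i: "i \<in> {..<length xs}" and j: "j \<in> {..<length xs}" and eq: "ced xs i = ced xs j"
  let ?n = "length xs"
  have d: "distinct xs" and n3: "3 \<le> ?n" using assms(1) unfolding is_cycle_def by auto
  have il: "i < ?n" and jl: "j < ?n" using i j by auto
  have il1: "(i + 1) mod ?n < ?n" and jl1: "(j + 1) mod ?n < ?n" using il by (intro mod_less_divisor; linarith)+
  from eq have "(xs!i = xs!j \<and> xs!((i+1) mod ?n) = xs!((j+1) mod ?n)) \<or>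
                (xs!i = xs!((j+1) mod ?n) \<and> xs!((i+1) mod ?n) = xs!j)"
    unfolding ced_def by (simp add: doubleton_eq_iff)
  thus "i = j"
  proof
    assume "xs!i = xs!j \<and> xs!((i+1) mod ?n) = xs!((j+1) mod ?n)"
    thus "i = j" using nth_eq_iff_index_eq[OF d il jl] by blast
  next
    assume h: "xs!i = xs!((j+1) mod ?n) \<and> xs!((i+1) mod ?n) = xs!j"
    have "i = (j+1) mod ?n" using h nth_eq_iff_index_eq[OF d il jl1] by blast
    moreover have "j = (i+1) mod ?n" using h nth_eq_iff_index_eq[OF d il1 jl] by blast
    ultimately show "i = j" using mod_arith1[OF il jl n3] by blast
  qed
qed

lemma card_cyc: "is_cycle V E xs \<Longrightarrow> card (cyc xs) = length xs"
  unfolding cyc_def by (subst card_image[OF ced_inj]) simp_all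

lemma finite_cyc: "finite (cyc xs)"
  unfolding cyc_def by simp

lemma cyc_sub:
  assumes "is_cycle V E xs" shows "cyc xs \<subseteq> E"
proof
  fix e assume "e \<in> cyc xs"
  then obtain i where i: "i < length xs" "e = ced xs i" unfolding cyc_def by blast
  have "\<forall>i < length xs. {xs ! i, xs ! ((i + 1) mod length xs)} \<in> E" using assms unfolding is_cycle_def by blast
  thus "e \<in> E" using i unfolding ced_def by blast
qed

lemma cyc_edge:
  assumes "is_cycle V E xs" "e \<in> cyc xs"
  shows "\<exists>u v. e = {u, v} \<and> u \<noteq> v \<and> u \<in> set xs \<and> v \<in> set xs"
proof -
  from assms(2) obtain i where i: "i < length xs" "e = ced xs i" unfolding cyc_def by blast
  have "0 < length xs" using i(1) by linarith
  hence m: "(i + 1) mod length xs < length xs" by (rule mod_less_divisor)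
  show ?thesis
  proof (intro exI conjI)
    show "e = {xs ! i, xs ! ((i + 1) mod length xs)}" using i(2) unfolding ced_def .
    show "xs ! i \<noteq> xs ! ((i + 1) mod length xs)" using ced_ne[OF assms(1) i(1)] .
    show "xs ! i \<in> set xs" using i(1) by (rule nth_mem)
    show "xs ! ((i + 1) mod length xs) \<in> set xs" using m by (rule nth_mem)
  qed
qed

lemma shift_sum:
  fixes f :: "nat \<Rightarrow> nat"
  assumes "0 < n"
  shows "(\<Sum>i<n. f ((i + 1) mod n)) = (\<Sum>i<n. f i)"
proof -
  obtain m where n: "n = Suc m" using assms by (cases n) auto
  have "(\<Sum>i<Suc m. f ((i + 1) mod Suc m)) = (\<Sum>i<m. f ((i + 1) mod Suc m)) + f 0"
    by (simp add: sum.lessThan_Suc)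
  also have "(\<Sum>i<m. f ((i + 1) mod Suc m)) = (\<Sum>i<m. f (Suc i))"
    by (rule sum.cong) auto
  also have "(\<Sum>i<m. f (Suc i)) + f 0 = (\<Sum>i<Suc m. f i)"
    unfolding sum.lessThan_Suc_shift by simp
  finally show ?thesis using n by simp
qed

lemma even_cyc:
  fixes \<phi> :: "'a \<Rightarrow> nat"
  assumes "is_cycle V E xs"
  shows "even (\<Sum>e\<in>cyc xs. sum \<phi> e)"
proof -
  let ?n = "length xs"
  have "(\<Sum>e\<in>cyc xs. sum \<phi> e) = (\<Sum>i<?n. sum \<phi> (ced xs i))"
    unfolding cyc_def using sum.reindex[OF ced_inj[OF assms]] by simp
  also have "\<dots> = (\<Sum>i<?n. \<phi> (xs ! i) + \<phi> (xs ! ((i + 1) mod ?n)))"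
    by (rule sum.cong) (use ced_ne[OF assms] in \<open>auto simp: ced_def\<close>)
  also have "\<dots> = (\<Sum>i<?n. \<phi> (xs ! i)) + (\<Sum>i<?n. \<phi> (xs ! ((i + 1) mod ?n)))"
    by (simp add: sum.distrib)
  also have "(\<Sum>i<?n. \<phi> (xs ! ((i + 1) mod ?n))) = (\<Sum>i<?n. \<phi> (xs ! i))"
  proof -
    have "0 < ?n" using assms unfolding is_cycle_def by linarith
    thus ?thesis by (rule shift_sum)
  qed
  finally show ?thesis by simp
qed

lemma rt_sym:
  assumes "(a, b) \<in> {(x, y). {x, y} \<in> E}\<^sup>*"
  shows "(b, a) \<in> {(x, y). {x, y} \<in> E}\<^sup>*"
  using assms
proof (induction rule: rtrancl_induct)
  case base thus ?case by simp
next
  case (step y z)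
  hence "(z, y) \<in> {(x, y). {x, y} \<in> E}" by (simp add: insert_commute)
  thus ?case using step.IH by (rule converse_rtrancl_into_rtrancl)
qed

lemma conn_cyc:
  assumes "is_cycle V E xs"
  shows "connected_graph (set xs) (cyc xs)"
proof -
  let ?n = "length xs"
  let ?R = "{(x, y). {x, y} \<in> cyc xs}"
  have n3: "3 \<le> ?n" using assms unfolding is_cycle_def by auto
  have reach: "i < ?n \<Longrightarrow> (xs ! 0, xs ! i) \<in> ?R\<^sup>*" for i
  proof (induction i)
    case 0 thus ?case by simp
  next
    case (Suc i)
    have "ced xs i \<in> cyc xs" using Suc.prems unfolding cyc_def by auto
    hence "(xs ! i, xs ! Suc i) \<in> ?R" using Suc.prems unfolding ced_def by simp
    thus ?case using Suc by (meson Suc_lessD rtrancl_into_rtrancl)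
  qed
  show ?thesis unfolding connected_graph_def
  proof (intro conjI ballI)
    show "set xs \<noteq> {}" using n3 by auto
  next
    fix u v assume "u \<in> set xs" "v \<in> set xs"
    then obtain i j where ij: "i < ?n" "u = xs ! i" "j < ?n" "v = xs ! j" by (auto simp: in_set_conv_nth)
    have "(u, xs ! 0) \<in> ?R\<^sup>*" using rt_sym[OF reach[OF ij(1)]] ij(2) by simp
    moreover have "(xs ! 0, v) \<in> ?R\<^sup>*" using reach[OF ij(3)] ij(4) by simp
    ultimately show "(u, v) \<in> ?R\<^sup>*" by (rule rtrancl_trans)
  qed
qed

lemma conn_union:
  assumes "connected_graph V1 E1" "connected_graph V2 E2" "V1 \<inter> V2 \<noteq> {}"
  shows "connected_graph (V1 \<union> V2) (E1 \<union> E2)"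
proof -
  let ?R = "\<lambda>E. {(x, y). {x, y} \<in> E}"
  have m1: "(?R E1)\<^sup>* \<subseteq> (?R (E1 \<union> E2))\<^sup>*" by (rule rtrancl_mono) auto
  have m2: "(?R E2)\<^sup>* \<subseteq> (?R (E1 \<union> E2))\<^sup>*" by (rule rtrancl_mono) auto
  obtain w where w: "w \<in> V1" "w \<in> V2" using assms(3) by auto
  show ?thesis unfolding connected_graph_def
  proof (intro conjI ballI)
    show "V1 \<union> V2 \<noteq> {}" using w by auto
  next
    fix u v assume u: "u \<in> V1 \<union> V2" and v: "v \<in> V1 \<union> V2"
    have "(u, w) \<in> (?R (E1 \<union> E2))\<^sup>*"
      using u w assms(1,2) m1 m2 unfolding connected_graph_def by blast
    moreover have "(w, v) \<in> (?R (E1 \<union> E2))\<^sup>*"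
      using v w assms(1,2) m1 m2 unfolding connected_graph_def by blast
    ultimately show "(u, v) \<in> (?R (E1 \<union> E2))\<^sup>*" by (rule rtrancl_trans)
  qed
qed

lemma cyc_disj:
  assumes "is_cycle V E xs" "is_cycle V E ys" "card (set xs \<inter> set ys) \<le> 1"
  shows "cyc xs \<inter> cyc ys = {}"
proof (rule ccontr)
  assume "cyc xs \<inter> cyc ys \<noteq> {}"
  then obtain e where e: "e \<in> cyc xs" "e \<in> cyc ys" by blast
  from cyc_edge[OF assms(1) e(1)] obtain u v where uv: "e = {u, v}" "u \<noteq> v" "u \<in> set xs" "v \<in> set xs" by blast
  from cyc_edge[OF assms(2) e(2)] obtain a b where ab: "e = {a, b}" "a \<in> set ys" "b \<in> set ys" by blast
  have "u \<in> set ys" "v \<in> set ys" using uv(1) ab by (auto simp: doubleton_eq_iff)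
  hence "{u, v} \<subseteq> set xs \<inter> set ys" using uv by auto
  hence "card {u, v} \<le> card (set xs \<inter> set ys)" by (intro card_mono) auto
  thus False using uv(2) assms(3) by simp
qed



lemma hg_contra:
  assumes hg: "highly_graceful V E" and sub: "subgraph V' E' V E"
    and conn: "connected_graph V' E'" and fin: "finite V'"
    and edg: "\<forall>e\<in>E'. \<exists>u v. e = {u, v} \<and> u \<noteq> v \<and> u \<in> V' \<and> v \<in> V'"
    and ev: "\<And>\<phi> :: 'a \<Rightarrow> nat. even (\<Sum>e\<in>E'. sum \<phi> e)"
  shows "card E' mod 4 = 0 \<or> card E' mod 4 = 3"
proof -
  have "graceful V' E'" using hg sub conn unfolding highly_graceful_def by blast
  then obtain \<phi> where gl: "graceful_labeling V' E' \<phi>" unfolding graceful_def by blast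
  show ?thesis using rosa[OF fin edg ev gl] .
qed

lemma cyc_edge_in:
  assumes "is_cycle V E xs" "e \<in> cyc xs" "set xs \<subseteq> W"
  shows "\<exists>u v. e = {u, v} \<and> u \<noteq> v \<and> u \<in> W \<and> v \<in> W"
proof -
  from cyc_edge[OF assms(1,2)] obtain u v where "e = {u, v}" "u \<noteq> v" "u \<in> set xs" "v \<in> set xs" by blast
  thus ?thesis using assms(3) by blast
qed

lemma cyc_edge_sub:
  assumes "is_cycle V E xs" "e \<in> cyc xs"
  shows "e \<subseteq> set xs"
proof -
  from cyc_edge[OF assms(1,2)] obtain u v where "e = {u, v}" "u \<in> set xs" "v \<in> set xs" by blast
  thus ?thesis by simp
qed

lemma set_sub: "is_cycle V E xs \<Longrightarrow> set xs \<subseteq> V"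
  unfolding is_cycle_def by blast

lemma subgraph_cyc: "is_cycle V E c \<Longrightarrow> subgraph (set c) (cyc c) V E"
  unfolding subgraph_def using set_sub cyc_sub cyc_edge_sub by blast

lemma subgraph_un: "subgraph V1 E1 V E \<Longrightarrow> subgraph V2 E2 V E \<Longrightarrow> subgraph (V1 \<union> V2) (E1 \<union> E2) V E"
  unfolding subgraph_def by blast

lemma card1_ne: "card X = 1 \<Longrightarrow> X \<noteq> {}"
  by auto

lemma case1:
  assumes hg: "highly_graceful V E" and c: "is_cycle V E c"
  shows "length c mod 4 = 0 \<or> length c mod 4 = 3"
proof -
  have "card (cyc c) mod 4 = 0 \<or> card (cyc c) mod 4 = 3"
  proof (rule hg_contra[OF hg])
    show "subgraph (set c) (cyc c) V E" by (rule subgraph_cyc[OF c])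
    show "connected_graph (set c) (cyc c)" by (rule conn_cyc[OF c])
    show "finite (set c)" by simp
    show "\<forall>e\<in>cyc c. \<exists>u v. e = {u, v} \<and> u \<noteq> v \<and> u \<in> set c \<and> v \<in> set c"
      using cyc_edge_in[OF c] by blast
    show "even (\<Sum>e\<in>cyc c. sum \<phi> e)" for \<phi> :: "'a \<Rightarrow> nat" by (rule even_cyc[OF c])
  qed
  thus ?thesis using card_cyc[OF c] by simp
qed

lemma case2:
  assumes hg: "highly_graceful V E" and c: "is_cycle V E c" and d: "is_cycle V E d"
    and cd: "card (set c \<inter> set d) = 1"
  shows "(length c + length d) mod 4 = 0 \<or> (length c + length d) mod 4 = 3"
proof -
  have disj: "cyc c \<inter> cyc d = {}" using cyc_disj[OF c d] cd by simp
  have ne: "set c \<inter> set d \<noteq> {}" using card1_ne[OF cd] .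
  let ?V = "set c \<union> set d" and ?E = "cyc c \<union> cyc d"
  have "card ?E mod 4 = 0 \<or> card ?E mod 4 = 3"
  proof (rule hg_contra[OF hg])
    show "subgraph ?V ?E V E" by (rule subgraph_un[OF subgraph_cyc[OF c] subgraph_cyc[OF d]])
    show "connected_graph ?V ?E" by (rule conn_union[OF conn_cyc[OF c] conn_cyc[OF d] ne])
    show "finite ?V" by simp
    show "\<forall>e\<in>?E. \<exists>u v. e = {u, v} \<and> u \<noteq> v \<and> u \<in> ?V \<and> v \<in> ?V"
    proof
      fix e assume "e \<in> ?E"
      thus "\<exists>u v. e = {u, v} \<and> u \<noteq> v \<and> u \<in> ?V \<and> v \<in> ?V"
      proof
        assume "e \<in> cyc c" thus ?thesis by (rule cyc_edge_in[OF c]) blast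
      next
        assume "e \<in> cyc d" thus ?thesis by (rule cyc_edge_in[OF d]) blast
      qed
    qed
    show "even (\<Sum>e\<in>?E. sum \<phi> e)" for \<phi> :: "'a \<Rightarrow> nat"
      using even_cyc[OF c, of \<phi>] even_cyc[OF d, of \<phi>]
      by (simp add: sum.union_disjoint[OF finite_cyc finite_cyc disj])
  qed
  moreover have "card ?E = length c + length d"
    using card_Un_disjoint[OF finite_cyc finite_cyc disj] card_cyc[OF c] card_cyc[OF d] by simp
  ultimately show ?thesis by simp
qed

lemma case3:
  assumes hg: "highly_graceful V E" and b: "is_cycle V E b" and c: "is_cycle V E c" and d: "is_cycle V E d"
    and cd: "set c \<inter> set d = {}" and bc: "card (set b \<inter> set c) = 1" and bd: "card (set b \<inter> set d) = 1"
  shows "(length b + length c + length d) mod 4 = 0 \<or> (length b + length c + length d) mod 4 = 3"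
proof -
  have disj1: "cyc b \<inter> cyc c = {}" using cyc_disj[OF b c] bc by simp
  have disj2: "cyc b \<inter> cyc d = {}" using cyc_disj[OF b d] bd by simp
  have disj3: "cyc c \<inter> cyc d = {}" using cyc_disj[OF c d] cd by simp
  have disj4: "(cyc b \<union> cyc c) \<inter> cyc d = {}" using disj2 disj3 by blast
  have ne1: "set b \<inter> set c \<noteq> {}" using card1_ne[OF bc] .
  have ne2: "(set b \<union> set c) \<inter> set d \<noteq> {}" using card1_ne[OF bd] by blast
  let ?V = "set b \<union> set c \<union> set d" and ?E = "cyc b \<union> cyc c \<union> cyc d"
  have fE: "finite (cyc b \<union> cyc c)" by (simp add: finite_cyc)
  have "card ?E mod 4 = 0 \<or> card ?E mod 4 = 3"
  proof (rule hg_contra[OF hg])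
    show "subgraph ?V ?E V E" by (rule subgraph_un[OF subgraph_un[OF subgraph_cyc[OF b] subgraph_cyc[OF c]] subgraph_cyc[OF d]])
    show "connected_graph ?V ?E"
      by (rule conn_union[OF conn_union[OF conn_cyc[OF b] conn_cyc[OF c] ne1] conn_cyc[OF d] ne2])
    show "finite ?V" by simp
    show "\<forall>e\<in>?E. \<exists>u v. e = {u, v} \<and> u \<noteq> v \<and> u \<in> ?V \<and> v \<in> ?V"
    proof
      fix e assume "e \<in> ?E"
      hence "e \<in> cyc b \<or> e \<in> cyc c \<or> e \<in> cyc d" by blast
      thus "\<exists>u v. e = {u, v} \<and> u \<noteq> v \<and> u \<in> ?V \<and> v \<in> ?V"
      proof (elim disjE)
        assume "e \<in> cyc b" thus ?thesis by (rule cyc_edge_in[OF b]) blast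
      next
        assume "e \<in> cyc c" thus ?thesis by (rule cyc_edge_in[OF c]) blast
      next
        assume "e \<in> cyc d" thus ?thesis by (rule cyc_edge_in[OF d]) blast
      qed
    qed
    show "even (\<Sum>e\<in>?E. sum \<phi> e)" for \<phi> :: "'a \<Rightarrow> nat"
      using even_cyc[OF b, of \<phi>] even_cyc[OF c, of \<phi>] even_cyc[OF d, of \<phi>]
      by (simp add: sum.union_disjoint[OF fE finite_cyc disj4] sum.union_disjoint[OF finite_cyc finite_cyc disj1])
  qed
  moreover have "card ?E = length b + length c + length d"
    using card_Un_disjoint[OF fE finite_cyc disj4] card_Un_disjoint[OF finite_cyc finite_cyc disj1]
      card_cyc[OF b] card_cyc[OF c] card_cyc[OF d] by simp
  ultimately show ?thesis by simp
qed

theorem proposition3p1: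
  fixes V :: "'a set" and E :: "'a set set"
  assumes "simple_graph V E"
    and "highly_graceful V E"
  shows "\<not> (\<exists>c. is_cycle V E c \<and> (length c mod 4 = 1 \<or> length c mod 4 = 2)) \<and>
         \<not> (\<exists>c d. is_cycle V E c \<and> is_cycle V E d \<and>
              length c mod 4 = 3 \<and> length d mod 4 = 3 \<and>
              card (set c \<inter> set d) = 1) \<and>
         \<not> (\<exists>b c d. is_cycle V E b \<and> is_cycle V E c \<and> is_cycle V E d \<and>
              length b mod 4 = 0 \<and> length c mod 4 = 3 \<and> length d mod 4 = 3 \<and>
              set c \<inter> set d = {} \<and>
              card (set b \<inter> set c) = 1 \<and> card (set b \<inter> set d) = 1)"
proof (intro conjI notI)
  assume "\<exists>c. is_cycle V E c \<and> (length c mod 4 = 1 \<or> length c mod 4 = 2)"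
  then obtain c where h: "is_cycle V E c" "length c mod 4 = 1 \<or> length c mod 4 = 2" by (elim exE conjE)
  show False using case1[OF assms(2) h(1)] h(2) by linarith
next
  assume "\<exists>c d. is_cycle V E c \<and> is_cycle V E d \<and>
              length c mod 4 = 3 \<and> length d mod 4 = 3 \<and> card (set c \<inter> set d) = 1"
  then obtain c d where h: "is_cycle V E c" "is_cycle V E d" "length c mod 4 = 3" "length d mod 4 = 3"
    "card (set c \<inter> set d) = 1" by (elim exE conjE)
  have "(length c + length d) mod 4 = (length c mod 4 + length d mod 4) mod 4" by (rule mod_add_eq[symmetric])
  hence "(length c + length d) mod 4 = 2" using h(3,4) by simp
  thus False using case2[OF assms(2) h(1,2,5)] by simp
next
  assume "\<exists>b c d. is_cycle V E b \<and> is_cycle V E c \<and> is_cycle V E d \<and>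
              length b mod 4 = 0 \<and> length c mod 4 = 3 \<and> length d mod 4 = 3 \<and>
              set c \<inter> set d = {} \<and>
              card (set b \<inter> set c) = 1 \<and> card (set b \<inter> set d) = 1"
  then obtain b c d where h: "is_cycle V E b" "is_cycle V E c" "is_cycle V E d"
    "length b mod 4 = 0" "length c mod 4 = 3" "length d mod 4 = 3"
    "set c \<inter> set d = {}" "card (set b \<inter> set c) = 1" "card (set b \<inter> set d) = 1" by (elim exE conjE)
  have "(length b + length c + length d) mod 4 = ((length b + length c) mod 4 + length d mod 4) mod 4" by (rule mod_add_eq[symmetric])
  moreover have "(length b + length c) mod 4 = (length b mod 4 + length c mod 4) mod 4" by (rule mod_add_eq[symmetric])
  ultimately have "(length b + length c + length d) mod 4 = 2" using h(4,5,6) by simp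
  thus False using case3[OF assms(2) h(1,2,3,7,8,9)] by simp
qed

end
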